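(* Let $C>0$ and $a,b\in\mathbb{R}$, and let $w(x)=Ce^{ax+b}$. For $\sigma>0$ and $x,y\in\mathbb{R}$ define the one-step transition density $$p_1(x\mid y,\sigma,C,a,b)=\frac{k_\sigma(x;y)\,w(x)}{\int_{\mathbb{R}}k_\sigma(z;y)\,w(z)\,\mathrm{d}z},$$ where $k_\sigma(\cdot;y)$ is the Gaussian density with mean $y$ and standard deviation $\sigma$, and for $n\in\mathbb{N}$ define the $n$-step density $$p_n(x_n\mid x_0,\sigma,C,a,b)=\int_{\mathbb{R}^{n-1}}\prod_{k=1}^{n}p_1(x_k\mid x_{k-1},\sigma,C,a,b)\,\mathrm{d}x_1\cdots\mathrm{d}x_{n-1}.$$ Then the model is robust of degree $n$ for every $n\in\mathbb{N}$ with parameter transformation $g_n(\sigma,C,a,b)=(\sqrt{n}\,\sigma,C,a,b)$; that is, for all $n\in\mathbb{N}$, $\sigma>0$ and $x,y\in\mathbb{R}$, $$p_n(x\mid y,\sigma,C,a,b)=p_1(x\mid y,\sqrt{n}\,\sigma,C,a,b).$$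
   Context: This concerns a one-dimensional discrete-time Markov movement model (locations $X_t\in\mathbb{R}$ at times $0,\tau,2\tau,\dots$) whose one-step transition density is a Gaussian movement kernel multiplied by a positive spatial weighting function $w$ and renormalized, as written in the claim. A model is called robust of degree $n$ if there is an injective map $g_n$ on the parameter space with $p_n(x\mid y,\bm\theta)=p_1(x\mid y,g_n(\bm\theta))$ for all $x,y$. *)

theory Defs
  imports "HOL-Probability.Probability"
begin

definition wfun :: "real \<Rightarrow> real \<Rightarrow> real \<Rightarrow> real \<Rightarrow> real" where
  "wfun C a b x = C * exp (a * x + b)"

definition kern :: "real \<Rightarrow> real \<Rightarrow> real \<Rightarrow> real" where
  "kern \<sigma> x y = normal_density y \<sigma> x"

definition p1 :: "real \<Rightarrow> real \<Rightarrow> real \<Rightarrow> real \<Rightarrow> real \<Rightarrow> real \<Rightarrow> real" where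
  "p1 x y \<sigma> C a b =
     kern \<sigma> x y * wfun C a b x / (LINT z|lborel. kern \<sigma> z y * wfun C a b z)"

definition path_pts :: "nat \<Rightarrow> real \<Rightarrow> real \<Rightarrow> (nat \<Rightarrow> real) \<Rightarrow> nat \<Rightarrow> real" where
  "path_pts n x y xs k = (if k = 0 then y else if k = n then x else xs k)"

definition pn :: "nat \<Rightarrow> real \<Rightarrow> real \<Rightarrow> real \<Rightarrow> real \<Rightarrow> real \<Rightarrow> real \<Rightarrow> real" where
  "pn n x y \<sigma> C a b =
     (LINT xs | PiM {1..<n} (\<lambda>_. lborel).
        (\<Prod>k\<in>{1..n}. p1 (path_pts n x y xs k) (path_pts n x y xs (k - 1)) \<sigma> C a b))"

end

theory Submission
  imports Defs
begin

lemma exp_ident: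
  fixes t :: real assumes "t > 0"
  shows "exp (-((z-y)^2) / (2* t^2)) * exp (a*z+b)
       = exp (b + a*y + a^2* t^2/2) * exp (-((z-(y+a* t^2))^2) / (2* t^2))"
proof -
  have "-((z-y)^2) / (2* t^2) + (a*z+b) = (b + a*y + a^2* t^2/2) + -((z-(y+a* t^2))^2) / (2* t^2)"
    using assms by (simp add: field_simps power2_eq_square)
  then show ?thesis by (simp add: exp_add[symmetric])
qed

lemma kw_eq:
  assumes "\<sigma> > 0"
  shows "kern \<sigma> z y * wfun C a b z
       = (C * exp (b + a*y + a^2*\<sigma>^2/2)) * normal_density (y + a*\<sigma>^2) \<sigma> z"
proof -
  have "kern \<sigma> z y * wfun C a b z =
     C * (1 / sqrt (2 * pi * \<sigma>\<^sup>2)) * (exp (-((z-y)^2) / (2*\<sigma>^2)) * exp (a*z+b))"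
    unfolding kern_def wfun_def normal_density_def by simp
  also have "\<dots> = C * (1 / sqrt (2 * pi * \<sigma>\<^sup>2)) * (exp (b + a*y + a^2*\<sigma>^2/2) * exp (-((z-(y+a*\<sigma>^2))^2) / (2*\<sigma>^2)))"
    using exp_ident[OF assms] by simp
  also have "\<dots> = (C * exp (b + a*y + a^2*\<sigma>^2/2)) * normal_density (y + a*\<sigma>^2) \<sigma> z"
    unfolding normal_density_def by simp
  finally show ?thesis .
qed

lemma p1_eq:
  assumes "\<sigma> > 0" "C > 0"
  shows "p1 x y \<sigma> C a b = normal_density (y + a*\<sigma>^2) \<sigma> x"
proof -
  have "(LINT z|lborel. kern \<sigma> z y * wfun C a b z) = C * exp (b + a*y + a^2*\<sigma>^2/2)"
    using kw_eq[OF assms(1)] integral_normal_density[OF assms(1), of "y + a*\<sigma>^2"] by simp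
  then show ?thesis unfolding p1_def using kw_eq[OF assms(1), of x y C a b] assms by simp
qed

lemma pp_meas:
  assumes "k \<le> n"
  shows "(\<lambda>xs. path_pts n x y xs k) \<in> borel_measurable (PiM {1..<n} (\<lambda>_. lborel))"
proof (cases "k = 0")
  case True then show ?thesis unfolding path_pts_def by simp
next
  case k0: False
  show ?thesis
  proof (cases "k = n")
  case True then show ?thesis using k0 unfolding path_pts_def by simp
next
  case False
  then have "k \<in> {1..<n}" using assms k0 by auto
  then have "(\<lambda>xs. xs k) \<in> borel_measurable (PiM {1..<n} (\<lambda>_. lborel))"
    using measurable_component_singleton[of k "{1..<n}" "\<lambda>_. lborel"] by simp
  then show ?thesis using False k0 unfolding path_pts_def by simp
qed
qed

lemma integrand_meas:
  "(\<lambda>xs. \<Prod>k\<in>{1..n}. normal_density (path_pts n x y xs (k-1) + m) \<sigma> (path_pts n x y xs k))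
     \<in> borel_measurable (PiM {1..<n} (\<lambda>_. lborel))"
proof (rule borel_measurable_prod)
  fix k assume "k \<in> {1..n}"
  then have [measurable]: "(\<lambda>xs. path_pts n x y xs k) \<in> borel_measurable (PiM {1..<n} (\<lambda>_. lborel))"
     "(\<lambda>xs. path_pts n x y xs (k-1)) \<in> borel_measurable (PiM {1..<n} (\<lambda>_. lborel))"
    by (intro pp_meas; auto)+
  show "(\<lambda>xs. normal_density (path_pts n x y xs (k-1) + m) \<sigma> (path_pts n x y xs k))
     \<in> borel_measurable (PiM {1..<n} (\<lambda>_. lborel))"
    unfolding normal_density_def by measurable
qed

lemma nd_shift: "normal_density \<mu> \<sigma> x = normal_density 0 \<sigma> (x - \<mu>)"
  by (simp add: normal_density_def)

lemma conv_step:
  assumes "\<sigma> > 0" "s > 0"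
  shows "(\<integral>\<^sup>+z. ennreal (normal_density (z + m) \<sigma> x * normal_density \<mu> s z) \<partial>lborel)
       = ennreal (normal_density (\<mu> + m) (sqrt (\<sigma>^2 + s^2)) x)"
proof -
  let ?f = "\<lambda>z. ennreal (normal_density (z + m) \<sigma> x * normal_density \<mu> s z)"
  have fm: "?f \<in> borel_measurable borel" unfolding normal_density_def by measurable
  have "(\<integral>\<^sup>+z. ?f z \<partial>lborel) = (\<integral>\<^sup>+u. ?f (\<mu> + 1*u) \<partial>lborel)"
    using nn_integral_real_affine[OF fm, of 1 \<mu>] by simp
  then have "(\<integral>\<^sup>+z. ennreal (normal_density (z + m) \<sigma> x * normal_density \<mu> s z) \<partial>lborel)
      = (\<integral>\<^sup>+u. ennreal (normal_density ((\<mu> + 1*u) + m) \<sigma> x * normal_density \<mu> s (\<mu> + 1*u)) \<partial>lborel)"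
    by simp
  also have "\<dots> = (\<integral>\<^sup>+u. ennreal (normal_density 0 \<sigma> ((x - m - \<mu>) - u) * normal_density 0 s u) \<partial>lborel)"
    by (auto intro!: nn_integral_cong simp: normal_density_def algebra_simps)
  also have "\<dots> = ennreal (normal_density 0 (sqrt (\<sigma>^2 + s^2)) (x - m - \<mu>))"
    using conv_normal_density_zero_mean[OF assms] by metis
  also have "\<dots> = ennreal (normal_density (\<mu> + m) (sqrt (\<sigma>^2 + s^2)) x)"
    by (simp add: normal_density_def algebra_simps)
  finally show ?thesis .
qed

lemma main_nn:
  assumes "\<sigma> > 0"
  shows "(\<integral>\<^sup>+xs. ennreal (\<Prod>k\<in>{1..Suc j}. normal_density (path_pts (Suc j) x y xs (k-1) + m) \<sigma> (path_pts (Suc j) x y xs k))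
           \<partial>PiM {1..<Suc j} (\<lambda>_. lborel))
       = ennreal (normal_density (y + real (Suc j) * m) (sqrt (real (Suc j)) * \<sigma>) x)"
proof (induction j arbitrary: x)
  case 0
  show ?case by (simp add: PiM_empty path_pts_def nn_integral_count_space_finite)
next
  case (Suc j)
  interpret product_sigma_finite "\<lambda>_. lborel" by standard
  define n where "n = Suc j"
  have n1: "n \<ge> 1" by (simp add: n_def)
  have I: "{1..<Suc n} = insert n {1..<n}" using n1 by auto
  let ?F = "\<lambda>xs. ennreal (\<Prod>k\<in>{1..Suc n}. normal_density (path_pts (Suc n) x y xs (k-1) + m) \<sigma> (path_pts (Suc n) x y xs k))"
  let ?A = "\<lambda>z xs. (\<Prod>k\<in>{1..n}. normal_density (path_pts n z y xs (k-1) + m) \<sigma> (path_pts n z y xs k))"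
  have meas: "?F \<in> borel_measurable (PiM (insert n {1..<n}) (\<lambda>_. lborel))"
    unfolding I[symmetric] by (rule measurable_compose[OF integrand_meas measurable_ennreal])
  have split: "?F (xs(n := z)) = ennreal (?A z xs) * ennreal (normal_density (z + m) \<sigma> x)" for xs z
  proof -
    have "{1..Suc n} = insert (Suc n) {1..n}" by auto
    have "(\<Prod>k\<in>{1..Suc n}. normal_density (path_pts (Suc n) x y (xs(n:=z)) (k-1) + m) \<sigma> (path_pts (Suc n) x y (xs(n:=z)) k))
      = normal_density (z + m) \<sigma> x * (\<Prod>k\<in>{1..n}. normal_density (path_pts (Suc n) x y (xs(n:=z)) (k-1) + m) \<sigma> (path_pts (Suc n) x y (xs(n:=z)) k))"
    proof -
      have "path_pts (Suc n) x y (xs(n:=z)) n = z" "path_pts (Suc n) x y (xs(n:=z)) (Suc n) = x"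
        using n1 unfolding path_pts_def by auto
      with \<open>{1..Suc n} = insert (Suc n) {1..n}\<close> show ?thesis by simp
    qed
    also have "(\<Prod>k\<in>{1..n}. normal_density (path_pts (Suc n) x y (xs(n:=z)) (k-1) + m) \<sigma> (path_pts (Suc n) x y (xs(n:=z)) k)) = ?A z xs"
    proof (rule prod.cong)
      fix k assume "k \<in> {1..n}"
      then have "path_pts (Suc n) x y (xs(n:=z)) k = path_pts n z y xs k"
           "path_pts (Suc n) x y (xs(n:=z)) (k-1) = path_pts n z y xs (k-1)"
        by (auto simp: path_pts_def)
      then show "normal_density (path_pts (Suc n) x y (xs(n:=z)) (k-1) + m) \<sigma> (path_pts (Suc n) x y (xs(n:=z)) k)
         = normal_density (path_pts n z y xs (k-1) + m) \<sigma> (path_pts n z y xs k)" by simp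
    qed simp
    finally have eq: "(\<Prod>k\<in>{1..Suc n}. normal_density (path_pts (Suc n) x y (xs(n:=z)) (k-1) + m) \<sigma> (path_pts (Suc n) x y (xs(n:=z)) k))
      = ?A z xs * normal_density (z + m) \<sigma> x" by (simp only: mult.commute)
    have "?F (xs(n := z)) = ennreal (?A z xs * normal_density (z + m) \<sigma> x)"
      by (simp only: eq)
    also have "\<dots> = ennreal (?A z xs) * ennreal (normal_density (z + m) \<sigma> x)"
      by (rule ennreal_mult) (auto intro!: prod_nonneg)
    finally show ?thesis .
  qed
  have "integral\<^sup>N (PiM {1..<Suc n} (\<lambda>_. lborel)) ?F
      = (\<integral>\<^sup>+z. (\<integral>\<^sup>+xs. ?F (xs(n := z)) \<partial>PiM {1..<n} (\<lambda>_. lborel)) \<partial>lborel)"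
    unfolding I by (rule product_nn_integral_insert_rev[OF _ _ meas]) auto
  also have "\<dots> = (\<integral>\<^sup>+z. (\<integral>\<^sup>+xs. ennreal (?A z xs) \<partial>PiM {1..<n} (\<lambda>_. lborel)) * ennreal (normal_density (z + m) \<sigma> x) \<partial>lborel)"
    unfolding split
    by (rule nn_integral_cong, rule nn_integral_multc, rule measurable_compose[OF integrand_meas measurable_ennreal])
  also have "\<dots> = (\<integral>\<^sup>+z. ennreal (normal_density (z + m) \<sigma> x * normal_density (y + real n * m) (sqrt (real n) * \<sigma>) z) \<partial>lborel)"
  proof (rule nn_integral_cong)
    fix z
    have "(\<integral>\<^sup>+xs. ennreal (?A z xs) \<partial>PiM {1..<n} (\<lambda>_. lborel))
        = ennreal (normal_density (y + real n * m) (sqrt (real n) * \<sigma>) z)"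
      using Suc.IH[of z] unfolding n_def .
    then show "(\<integral>\<^sup>+xs. ennreal (?A z xs) \<partial>PiM {1..<n} (\<lambda>_. lborel)) * ennreal (normal_density (z + m) \<sigma> x)
       = ennreal (normal_density (z + m) \<sigma> x * normal_density (y + real n * m) (sqrt (real n) * \<sigma>) z)"
      by (simp add: ennreal_mult mult.commute)
  qed
  also have "\<dots> = ennreal (normal_density (y + real n * m + m) (sqrt (\<sigma>^2 + (sqrt (real n) * \<sigma>)^2)) x)"
    by (rule conv_step) (use assms n1 in auto)
  also have "sqrt (\<sigma>^2 + (sqrt (real n) * \<sigma>)^2) = sqrt (real (Suc n)) * \<sigma>"
  proof -
    have "\<sigma>^2 + (sqrt (real n) * \<sigma>)^2 = real (Suc n) * \<sigma>^2"
      by (simp add: power_mult_distrib algebra_simps)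
    then show ?thesis using assms by (simp add: real_sqrt_mult)
  qed
  also have "y + real n * m + m = y + real (Suc n) * m" by (simp add: algebra_simps)
  finally show ?case unfolding n_def .
qed

theorem theorem2:
  fixes n :: nat and \<sigma> C a b x y :: real
  assumes "n \<ge> 1" and "\<sigma> > 0" and "C > 0"
  shows "pn n x y \<sigma> C a b = p1 x y (sqrt (real n) * \<sigma>) C a b"
proof -
  obtain j where j: "n = Suc j" using assms(1) by (cases n) auto
  define m where "m = a * \<sigma>^2"
  have "pn n x y \<sigma> C a b = (LINT xs | PiM {1..<n} (\<lambda>_. lborel).
        (\<Prod>k\<in>{1..n}. normal_density (path_pts n x y xs (k-1) + m) \<sigma> (path_pts n x y xs k)))"
    unfolding pn_def m_def using assms by (simp add: p1_eq)
  also have "\<dots> = normal_density (y + real n * m) (sqrt (real n) * \<sigma>) x"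
  proof (rule has_bochner_integral_integral_eq, rule has_bochner_integral_nn_integral)
    show "(\<lambda>xs. \<Prod>k\<in>{1..n}. normal_density (path_pts n x y xs (k-1) + m) \<sigma> (path_pts n x y xs k))
       \<in> borel_measurable (PiM {1..<n} (\<lambda>_. lborel))" by (rule integrand_meas)
    show "AE xs in PiM {1..<n} (\<lambda>_. lborel). 0 \<le> (\<Prod>k\<in>{1..n}. normal_density (path_pts n x y xs (k-1) + m) \<sigma> (path_pts n x y xs k))"
      by (auto intro!: prod_nonneg)
    show "0 \<le> normal_density (y + real n * m) (sqrt (real n) * \<sigma>) x" by simp
    show "(\<integral>\<^sup>+xs. ennreal (\<Prod>k\<in>{1..n}. normal_density (path_pts n x y xs (k-1) + m) \<sigma> (path_pts n x y xs k)) \<partial>PiM {1..<n} (\<lambda>_. lborel))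
       = ennreal (normal_density (y + real n * m) (sqrt (real n) * \<sigma>) x)"
      unfolding j by (rule main_nn[OF assms(2)])
  qed
  also have "\<dots> = p1 x y (sqrt (real n) * \<sigma>) C a b"
    using assms by (subst p1_eq) (auto simp: m_def power_mult_distrib algebra_simps)
  finally show ?thesis .
qed

end
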